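(* Every virtually solvable subgroup of $PL_o(I)$ is solvable.
   Context: $PL_o(I)$ is the group of orientation-preserving piecewise-linear homeomorphisms of $I=[0,1]$ with finitely many breaks in slope. *)

theory Defs
  imports "HOL-Analysis.Analysis" "HOL-Algebra.Solvable_Groups" "HOL-Algebra.Coset"
begin

text \<open>Elements are represented as functions real => real that are the
identity outside [0,1], so that composition gives a group with identity id.\<close>

definition PL_homeo_I :: "(real \<Rightarrow> real) \<Rightarrow> bool" where
  "PL_homeo_I f \<longleftrightarrow>
     continuous_on {0..1} f \<and>
     strict_mono_on {0..1} f \<and>
     f 0 = 0 \<and> f 1 = 1 \<and>
     (\<exists>S. finite S \<and>
        (\<forall>a b. 0 \<le> a \<and> a < b \<and> b \<le> 1 \<and> {a<..<b} \<inter> S = {} \<longrightarrow>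
           (\<exists>m c. \<forall>x\<in>{a..b}. f x = m * x + c))) \<and>
     (\<forall>x. x \<notin> {0..1} \<longrightarrow> f x = x)"

definition PLoI :: "(real \<Rightarrow> real) monoid" where
  "PLoI = \<lparr>carrier = {f. PL_homeo_I f}, mult = (\<circ>), one = id\<rparr>"

definition virtually_solvable :: "('a, 'b) monoid_scheme \<Rightarrow> bool" where
  "virtually_solvable G \<longleftrightarrow>
     (\<exists>K. subgroup K G \<and> finite (rcosets\<^bsub>G\<^esub> K) \<and> solvable (G\<lparr>carrier := K\<rparr>))"

end

theory Submission
  imports Defs
begin

lemma PL_D:
  assumes "PL_homeo_I f"
  shows "continuous_on {0..1} f" "strict_mono_on {0..1} f" "f 0 = 0" "f 1 = 1"
    "\<And>x. x \<notin> {0..1} \<Longrightarrow> f x = x"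
  using assms unfolding PL_homeo_I_def by auto

lemma PL_pieces:
  assumes "PL_homeo_I f"
  obtains S where "finite S" "\<And>a b. 0 \<le> a \<Longrightarrow> a < b \<Longrightarrow> b \<le> 1 \<Longrightarrow> {a<..<b} \<inter> S = {}
     \<Longrightarrow> \<exists>m c. \<forall>x\<in>{a..b}. f x = m * x + c"
  using assms unfolding PL_homeo_I_def by metis

lemma PL_mono:
  assumes "PL_homeo_I f" shows "strict_mono f"
proof (rule strict_monoI)
  note D = PL_D[OF assms]
  have sm: "\<And>x y. x \<in> {0..1} \<Longrightarrow> y \<in> {0..1} \<Longrightarrow> x < y \<Longrightarrow> f x < f y"
    using D(2) by (auto simp: strict_mono_on_def)
  have le: "\<And>x y. x \<in> {0..1} \<Longrightarrow> y \<in> {0..1} \<Longrightarrow> x \<le> y \<Longrightarrow> f x \<le> f y"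
    using sm by (metis order.order_iff_strict)
  fix x y :: real assume xy: "x < y"
  show "f x < f y"
  proof (cases "x \<in> {0..1}")
    case True
    show ?thesis
    proof (cases "y \<in> {0..1}")
      case True thus ?thesis using sm \<open>x \<in> {0..1}\<close> xy by blast
    next
      case False
      hence "y > 1" using xy True by auto
      have "f x \<le> f 1" using le True by auto
      thus ?thesis using D(4) D(5)[OF False] \<open>y > 1\<close> by auto
    qed
  next
    case False
    hence fx: "f x = x" using D(5) by auto
    show ?thesis
    proof (cases "y \<in> {0..1}")
      case True
      hence "x < 0" using False xy by auto
      have "f 0 \<le> f y" using le True by auto
      thus ?thesis using D(3) fx \<open>x < 0\<close> by auto
    next
      case False thus ?thesis using fx D(5) xy by auto
    qed
  qed
qed

lemma PL_range: assumes "PL_homeo_I f" "x \<in> {0..1}" shows "f x \<in> {0..1}"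
proof -
  have "f 0 \<le> f x" "f x \<le> f 1" using assms PL_mono[OF assms(1)]
    by (auto simp: strict_mono_less_eq)
  thus ?thesis using PL_D[OF assms(1)] by auto
qed

lemma PL_cont: assumes "PL_homeo_I f" shows "continuous_on UNIV f"
proof -
  note D = PL_D[OF assms]
  have e1: "\<And>x. x \<le> 0 \<Longrightarrow> f x = x" using D(3) D(5) by (metis atLeastAtMost_iff linorder_not_le order_less_le)
  have e2: "\<And>x. x \<ge> 1 \<Longrightarrow> f x = x" using D(4) D(5) by (metis atLeastAtMost_iff linorder_not_le order_less_le)
  have a: "continuous_on {..0} f"
    by (rule continuous_on_cong[THEN iffD1, OF refl _ continuous_on_id]) (use e1 in auto)
  have b: "continuous_on {1..} f"
    by (rule continuous_on_cong[THEN iffD1, OF refl _ continuous_on_id]) (use e2 in auto)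
  have "continuous_on ({..0} \<union> {0..1} \<union> {1..}) f"
    by (intro continuous_on_closed_Un a b D(1)) auto
  moreover have "{..0} \<union> {0..1} \<union> {1..} = (UNIV::real set)" by auto
  ultimately show ?thesis by simp
qed

lemma PL_isCont: assumes "PL_homeo_I f" shows "isCont f x"
  using PL_cont[OF assms] by (simp add: continuous_on_eq_continuous_at)

lemma PL_bij: assumes "PL_homeo_I f" shows "bij f"
proof (rule bijI)
  show "inj f" using PL_mono[OF assms] strict_mono_imp_inj_on by blast
  show "surj f"
  proof -
    { fix y :: real
      have "\<exists>x. f x = y"
      proof (cases "y \<in> {0..1}")
        case True
        then obtain x where "x \<ge> 0" "x \<le> 1" "f x = y"
          using IVT'[of f 0 y 1] PL_D[OF assms] by auto
        thus ?thesis by blast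
      next
        case False thus ?thesis using PL_D(5)[OF assms] by metis
      qed }
    thus ?thesis by (metis surjI)
  qed
qed

lemma PL_id: "PL_homeo_I id"
proof -
  have "\<exists>m c. \<forall>x\<in>{a..b}. id x = m * x + c" for a b :: real
    by (rule exI[of _ 1], rule exI[of _ 0]) simp
  thus ?thesis unfolding PL_homeo_I_def
    by (auto simp: strict_mono_on_def intro!: exI[of _ "{}"])
qed

lemma PL_comp:
  assumes f: "PL_homeo_I f" and g: "PL_homeo_I g" shows "PL_homeo_I (f \<circ> g)"
proof -
  note Df = PL_D[OF f] and Dg = PL_D[OF g]
  obtain Sf where Sf: "finite Sf" "\<And>a b. 0 \<le> a \<Longrightarrow> a < b \<Longrightarrow> b \<le> 1 \<Longrightarrow> {a<..<b} \<inter> Sf = {}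
     \<Longrightarrow> \<exists>m c. \<forall>x\<in>{a..b}. f x = m * x + c" using PL_pieces[OF f] by blast
  obtain Sg where Sg: "finite Sg" "\<And>a b. 0 \<le> a \<Longrightarrow> a < b \<Longrightarrow> b \<le> 1 \<Longrightarrow> {a<..<b} \<inter> Sg = {}
     \<Longrightarrow> \<exists>m c. \<forall>x\<in>{a..b}. g x = m * x + c" using PL_pieces[OF g] by blast
  have mf: "strict_mono f" and mg: "strict_mono g" using PL_mono f g by auto
  have injg: "inj g" using mg strict_mono_imp_inj_on by blast
  have surjg: "surj g" using PL_bij[OF g] bij_is_surj by blast
  let ?S = "Sg \<union> g -` Sf"
  have finS: "finite ?S" using Sf(1) Sg(1) finite_vimageI[OF _ injg] by auto
  have pw: "\<exists>m c. \<forall>x\<in>{a..b}. (f \<circ> g) x = m * x + c"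
    if ab: "0 \<le> a" "a < b" "b \<le> 1" "{a<..<b} \<inter> ?S = {}" for a b
  proof -
    obtain m2 c2 where g2: "\<forall>x\<in>{a..b}. g x = m2 * x + c2" using Sg(2)[of a b] ab by auto
    have ga: "0 \<le> g a" using PL_range[OF g, of a] ab by auto
    have gb: "g b \<le> 1" using PL_range[OF g, of b] ab by auto
    have gab: "g a < g b" using mg ab by (simp add: strict_mono_less)
    have "{g a<..<g b} \<inter> Sf = {}"
    proof (rule ccontr)
      assume "{g a<..<g b} \<inter> Sf \<noteq> {}"
      then obtain s where s: "s \<in> Sf" "g a < s" "s < g b" by auto
      obtain x where x: "g x = s" using surjg by (metis surjD)
      have "a < x" "x < b" using s x mg by (auto simp: strict_mono_less)
      thus False using ab(4) s x by auto
    qed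
    then obtain m1 c1 where f1: "\<forall>x\<in>{g a..g b}. f x = m1 * x + c1"
      using Sf(2)[OF ga gab gb] by auto
    have "\<forall>x\<in>{a..b}. (f \<circ> g) x = (m1*m2) * x + (m1*c2 + c1)"
    proof
      fix x assume x: "x \<in> {a..b}"
      have "g x \<in> {g a..g b}" using x mg by (auto simp: strict_mono_less_eq)
      thus "(f \<circ> g) x = (m1*m2) * x + (m1*c2 + c1)" using f1 g2 x by (simp add: algebra_simps)
    qed
    thus ?thesis by blast
  qed
  have c: "continuous_on {0..1} (f \<circ> g)"
    using continuous_on_compose[OF continuous_on_subset[OF PL_cont[OF g]] continuous_on_subset[OF PL_cont[OF f]]]
    by auto
  have sm: "strict_mono_on {0..1} (f \<circ> g)"
    using mf mg by (auto simp: strict_mono_on_def strict_mono_less)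
  show ?thesis unfolding PL_homeo_I_def
    using c sm Df Dg finS pw by (auto intro!: exI[of _ ?S])
qed

abbreviation finv :: "(real \<Rightarrow> real) \<Rightarrow> real \<Rightarrow> real" where "finv f \<equiv> inv_into UNIV f"

lemma PL_inv:
  assumes f: "PL_homeo_I f" shows "PL_homeo_I (finv f)"
proof -
  note Df = PL_D[OF f]
  have bf: "bij f" using PL_bij[OF f] .
  have mf: "strict_mono f" using PL_mono[OF f] .
  have i1: "\<And>x. finv f (f x) = x" using bf by (simp add: bij_is_inj)
  have i2: "\<And>y. f (finv f y) = y" using bf by (simp add: bij_is_surj surj_f_inv_f)
  have mi: "strict_mono (finv f)"
  proof (rule strict_monoI)
    fix x y :: real assume "x < y"
    show "finv f x < finv f y"
    proof (rule ccontr)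
      assume "\<not> finv f x < finv f y"
      hence "f (finv f y) \<le> f (finv f x)" using mf by (simp add: strict_mono_less_eq)
      thus False using i2 \<open>x < y\<close> by simp
    qed
  qed
  obtain S where S: "finite S" "\<And>a b. 0 \<le> a \<Longrightarrow> a < b \<Longrightarrow> b \<le> 1 \<Longrightarrow> {a<..<b} \<inter> S = {}
     \<Longrightarrow> \<exists>m c. \<forall>x\<in>{a..b}. f x = m * x + c" using PL_pieces[OF f] by blast
  have i0: "finv f 0 = 0" using i1[of 0] Df(3) by simp
  have i01: "finv f 1 = 1" using i1[of 1] Df(4) by simp
  have iout: "\<And>x. x \<notin> {0..1} \<Longrightarrow> finv f x = x" using i1 Df(5) by metis
  have img: "f ` {0..1} = {0..1}"
  proof
    show "f ` {0..1} \<subseteq> {0..1}" using PL_range[OF f] by auto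
    show "{0..1} \<subseteq> f ` {0..1}"
    proof
      fix y :: real assume y: "y \<in> {0..1}"
      have "finv f 0 \<le> finv f y" "finv f y \<le> finv f 1" using y by (auto simp: strict_mono_less_eq[OF mi])
      hence "finv f y \<in> {0..1}" using i0 i01 by auto
      thus "y \<in> f ` {0..1}" using i2[of y] by (metis image_eqI)
    qed
  qed
  have c: "continuous_on {0..1} (finv f)"
    using continuous_on_inv[OF Df(1) compact_Icc[of 0 1], of "finv f"] i1 img by auto
  have pw: "\<exists>m c. \<forall>x\<in>{a..b}. finv f x = m * x + c"
    if ab: "0 \<le> a" "a < b" "b \<le> 1" "{a<..<b} \<inter> f ` S = {}" for a b
  proof -
    have a': "0 \<le> finv f a" using mi ab i0 by (metis strict_mono_less_eq)
    have b': "finv f b \<le> 1" using mi ab i01 by (metis strict_mono_less_eq)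
    have ab': "finv f a < finv f b" using mi ab by (simp add: strict_mono_less)
    have "{finv f a<..<finv f b} \<inter> S = {}"
    proof (rule ccontr)
      assume "{finv f a<..<finv f b} \<inter> S \<noteq> {}"
      then obtain s where s: "s \<in> S" "finv f a < s" "s < finv f b" by auto
      have "a < f s" "f s < b" using s mf i2 by (metis strict_mono_less)+
      thus False using ab(4) s by auto
    qed
    then obtain m c where fm: "\<forall>x\<in>{finv f a..finv f b}. f x = m * x + c"
      using S(2)[OF a' ab' b'] by auto
    have "f (finv f a) < f (finv f b)" using mf ab' by (simp add: strict_mono_less)
    hence "m * finv f a + c < m * finv f b + c" using fm ab' by auto
    hence "m \<noteq> 0" by auto
    have "\<forall>x\<in>{a..b}. finv f x = (1/m) * x + (- c/m)"
    proof
      fix x assume x: "x \<in> {a..b}"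
      have "finv f x \<in> {finv f a..finv f b}" using x mi by (auto simp: strict_mono_less_eq)
      hence "x = m * finv f x + c" using fm i2[of x] by metis
      thus "finv f x = (1/m) * x + (- c/m)" using \<open>m \<noteq> 0\<close> by (simp add: field_simps)
    qed
    thus ?thesis by blast
  qed
  have finS: "finite (f ` S)" using S(1) by auto
  have sm: "strict_mono_on {0..1} (finv f)" using mi by (auto simp: strict_mono_on_def strict_mono_less)
  show ?thesis unfolding PL_homeo_I_def
    using c sm i0 i01 iout finS pw by (auto intro!: exI[of _ "f ` S"])
qed

lemma carrier_PLoI[simp]: "carrier PLoI = {f. PL_homeo_I f}"
  and mult_PLoI[simp]: "mult PLoI = (\<circ>)" and one_PLoI[simp]: "one PLoI = id"
  by (auto simp: PLoI_def)

lemma group_PLoI: "group PLoI"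
proof (rule groupI)
  fix x assume x: "x \<in> carrier PLoI"
  show "\<exists>y\<in>carrier PLoI. y \<otimes>\<^bsub>PLoI\<^esub> x = \<one>\<^bsub>PLoI\<^esub>"
  proof (rule bexI[of _ "finv x"])
    have "PL_homeo_I x" using x by simp
    thus "finv x \<otimes>\<^bsub>PLoI\<^esub> x = \<one>\<^bsub>PLoI\<^esub>" using PL_bij by (simp add: bij_is_inj inv_o_cancel)
    show "finv x \<in> carrier PLoI" using PL_inv \<open>PL_homeo_I x\<close> by simp
  qed
qed (auto simp: PL_comp PL_id comp_assoc)

lemma inv_PLoI: assumes "PL_homeo_I f" shows "inv\<^bsub>PLoI\<^esub> f = finv f"
  using group.inv_equality[OF group_PLoI, of "finv f" f] assms PL_inv PL_bij
  by (auto simp: bij_is_inj)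

lemma inv_PLoI_app1: assumes "PL_homeo_I f" shows "(inv\<^bsub>PLoI\<^esub> f) (f x) = x"
  using inv_PLoI[OF assms] PL_bij[OF assms] by (simp add: bij_is_inj)

lemma inv_PLoI_app2: assumes "PL_homeo_I f" shows "f ((inv\<^bsub>PLoI\<^esub> f) x) = x"
  using inv_PLoI[OF assms] PL_bij[OF assms] by (simp add: bij_is_surj surj_f_inv_f)

lemma pow_PLoI: "f [^]\<^bsub>PLoI\<^esub> (n::nat) = f ^^ n"
proof (induction n)
  case (Suc n) then show ?case by (simp only: nat_pow_Suc funpow_Suc_right mult_PLoI)
qed simp

lemma finite_gap:
  assumes "finite (S::real set)" shows "\<exists>e>0. \<forall>s\<in>S. s \<noteq> p \<longrightarrow> e \<le> \<bar>s - p\<bar>"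
  using assms
proof (induction S rule: finite_induct)
  case empty then show ?case by (auto intro: exI[of _ 1])
next
  case (insert s S)
  then obtain e where e: "e > 0" "\<forall>s\<in>S. s \<noteq> p \<longrightarrow> e \<le> \<bar>s - p\<bar>" by blast
  show ?case
  proof (cases "s = p")
    case True thus ?thesis using e by auto
  next
    case False
    have "min e \<bar>s - p\<bar> > 0" using e False by auto
    moreover have "\<forall>s'\<in>insert s S. s' \<noteq> p \<longrightarrow> min e \<bar>s - p\<bar> \<le> \<bar>s' - p\<bar>"
    proof (intro ballI impI)
      fix s' assume "s' \<in> insert s S" "s' \<noteq> p"
      thus "min e \<bar>s - p\<bar> \<le> \<bar>s' - p\<bar>" using e(2) by (cases "s' = s") auto
    qed
    ultimately show ?thesis by blast
  qed
qed

lemma PL_out1: assumes "PL_homeo_I f" "x \<le> 0" shows "f x = x"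
  using PL_D[OF assms(1)] assms(2) by (metis atLeastAtMost_iff linorder_not_le order_less_le)

lemma PL_out2: assumes "PL_homeo_I f" "x \<ge> 1" shows "f x = x"
  using PL_D[OF assms(1)] assms(2) by (metis atLeastAtMost_iff linorder_not_le order_less_le)

lemma rrep_ex:
  assumes f: "PL_homeo_I f" and fp: "f p = p"
  shows "\<exists>e>0. \<exists>m. \<forall>x. p \<le> x \<and> x \<le> p + e \<longrightarrow> f x = p + m * (x - p)"
proof (cases "p \<ge> 1")
  case True
  hence "\<forall>x. p \<le> x \<and> x \<le> p + 1 \<longrightarrow> f x = p + 1 * (x - p)" using PL_out2[OF f] by auto
  thus ?thesis using zero_less_one by blast
next
  case False
  show ?thesis
  proof (cases "p < 0")
    case True
    have "\<forall>x. p \<le> x \<and> x \<le> p + (-p/2) \<longrightarrow> f x = p + 1 * (x - p)"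
    proof (intro allI impI)
      fix x assume "p \<le> x \<and> x \<le> p + (-p/2)"
      hence "x \<le> 0" using True by linarith
      thus "f x = p + 1 * (x - p)" using PL_out1[OF f] by simp
    qed
    moreover have "-p/2 > 0" using True by auto
    ultimately show ?thesis by blast
  next
    case False
    hence p01: "0 \<le> p" "p < 1" using \<open>\<not> p \<ge> 1\<close> by auto
    obtain S where S: "finite S" "\<And>a b. 0 \<le> a \<Longrightarrow> a < b \<Longrightarrow> b \<le> 1 \<Longrightarrow> {a<..<b} \<inter> S = {}
       \<Longrightarrow> \<exists>m c. \<forall>x\<in>{a..b}. f x = m * x + c" using PL_pieces[OF f] by blast
    obtain e0 where e0: "e0 > 0" "\<forall>s\<in>S. s \<noteq> p \<longrightarrow> e0 \<le> \<bar>s - p\<bar>" using finite_gap[OF S(1)] by blast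
    define e where "e = min e0 (1 - p)"
    have e: "e > 0" "p + e \<le> 1" using e0 p01 by (auto simp: e_def)
    have "{p<..<p+e} \<inter> S = {}"
    proof (rule ccontr)
      assume "{p<..<p+e} \<inter> S \<noteq> {}"
      then obtain s where "s \<in> S" "p < s" "s < p + e" by auto
      thus False using e0 by (auto simp: e_def)
    qed
    then obtain m c where mc: "\<forall>x\<in>{p..p+e}. f x = m * x + c" using S(2)[of p "p+e"] p01 e by auto
    have "p = m * p + c" using mc fp e by auto
    hence "\<forall>x. p \<le> x \<and> x \<le> p + e \<longrightarrow> f x = p + m * (x - p)" using mc by (auto simp: algebra_simps)
    thus ?thesis using e by blast
  qed
qed

lemma lrep_ex:
  assumes f: "PL_homeo_I f" and fp: "f p = p"
  shows "\<exists>e>0. \<exists>m. \<forall>x. p - e \<le> x \<and> x \<le> p \<longrightarrow> f x = p + m * (x - p)"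
proof (cases "p \<le> 0")
  case True
  hence "\<forall>x. p - 1 \<le> x \<and> x \<le> p \<longrightarrow> f x = p + 1 * (x - p)" using PL_out1[OF f] by auto
  thus ?thesis using zero_less_one by blast
next
  case False
  show ?thesis
  proof (cases "p > 1")
    case True
    have "\<forall>x. p - (p-1)/2 \<le> x \<and> x \<le> p \<longrightarrow> f x = p + 1 * (x - p)"
    proof (intro allI impI)
      fix x assume "p - (p-1)/2 \<le> x \<and> x \<le> p"
      hence "x \<ge> 1" using True by (simp add: field_simps)
      thus "f x = p + 1 * (x - p)" using PL_out2[OF f] by simp
    qed
    moreover have "(p-1)/2 > 0" using True by auto
    ultimately show ?thesis by blast
  next
    case False
    hence p01: "0 < p" "p \<le> 1" using \<open>\<not> p \<le> 0\<close> by auto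
    obtain S where S: "finite S" "\<And>a b. 0 \<le> a \<Longrightarrow> a < b \<Longrightarrow> b \<le> 1 \<Longrightarrow> {a<..<b} \<inter> S = {}
       \<Longrightarrow> \<exists>m c. \<forall>x\<in>{a..b}. f x = m * x + c" using PL_pieces[OF f] by blast
    obtain e0 where e0: "e0 > 0" "\<forall>s\<in>S. s \<noteq> p \<longrightarrow> e0 \<le> \<bar>s - p\<bar>" using finite_gap[OF S(1)] by blast
    define e where "e = min e0 p"
    have e: "e > 0" "0 \<le> p - e" using e0 p01 by (auto simp: e_def)
    have "{p-e<..<p} \<inter> S = {}"
    proof (rule ccontr)
      assume "{p-e<..<p} \<inter> S \<noteq> {}"
      then obtain s where "s \<in> S" "p - e < s" "s < p" by auto
      thus False using e0 by (auto simp: e_def)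
    qed
    then obtain m c where mc: "\<forall>x\<in>{p-e..p}. f x = m * x + c" using S(2)[of "p-e" p] p01 e by auto
    have "p = m * p + c" using mc fp e by auto
    hence "\<forall>x. p - e \<le> x \<and> x \<le> p \<longrightarrow> f x = p + m * (x - p)" using mc by (auto simp: algebra_simps)
    thus ?thesis using e by blast
  qed
qed

definition rslope :: "(real \<Rightarrow> real) \<Rightarrow> real \<Rightarrow> real" where
  "rslope f p = (THE m. \<exists>e>0. \<forall>x. p \<le> x \<and> x \<le> p + e \<longrightarrow> f x = p + m * (x - p))"

definition lslope :: "(real \<Rightarrow> real) \<Rightarrow> real \<Rightarrow> real" where
  "lslope f p = (THE m. \<exists>e>0. \<forall>x. p - e \<le> x \<and> x \<le> p \<longrightarrow> f x = p + m * (x - p))"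

lemma rslope_eq:
  assumes "e > 0" "\<forall>x. p \<le> x \<and> x \<le> p + e \<longrightarrow> f x = p + m * (x - p)"
  shows "rslope f p = m"
  unfolding rslope_def
proof (rule the_equality)
  show "\<exists>e>0. \<forall>x. p \<le> x \<and> x \<le> p + e \<longrightarrow> f x = p + m * (x - p)" using assms by blast
  fix m' assume "\<exists>e>0. \<forall>x. p \<le> x \<and> x \<le> p + e \<longrightarrow> f x = p + m' * (x - p)"
  then obtain e' where e': "e' > 0" "\<forall>x. p \<le> x \<and> x \<le> p + e' \<longrightarrow> f x = p + m' * (x - p)" by blast
  define d where "d = min e e'"
  have "d > 0" using assms e' by (simp add: d_def)
  have h1: "p + d \<le> p + e" "p + d \<le> p + e'" by (simp_all add: d_def)
  have "f (p + d) = p + m * (p + d - p)" using assms(2) h1 \<open>d>0\<close> by simp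
  moreover have "f (p + d) = p + m' * (p + d - p)" using e'(2) h1 \<open>d>0\<close> by simp
  ultimately have "f (p + d) = p + m * d" "f (p + d) = p + m' * d" by simp_all
  hence "m' * d = m * d" by simp
  thus "m' = m" using \<open>d > 0\<close> by simp
qed

lemma lslope_eq:
  assumes "e > 0" "\<forall>x. p - e \<le> x \<and> x \<le> p \<longrightarrow> f x = p + m * (x - p)"
  shows "lslope f p = m"
  unfolding lslope_def
proof (rule the_equality)
  show "\<exists>e>0. \<forall>x. p - e \<le> x \<and> x \<le> p \<longrightarrow> f x = p + m * (x - p)" using assms by blast
  fix m' assume "\<exists>e>0. \<forall>x. p - e \<le> x \<and> x \<le> p \<longrightarrow> f x = p + m' * (x - p)"
  then obtain e' where e': "e' > 0" "\<forall>x. p - e' \<le> x \<and> x \<le> p \<longrightarrow> f x = p + m' * (x - p)" by blast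
  define d where "d = min e e'"
  have "d > 0" using assms e' by (simp add: d_def)
  have h1: "p - e \<le> p - d" "p - e' \<le> p - d" by (simp_all add: d_def)
  have "f (p - d) = p + m * (p - d - p)" using assms(2) h1 \<open>d>0\<close> by simp
  moreover have "f (p - d) = p + m' * (p - d - p)" using e'(2) h1 \<open>d>0\<close> by simp
  ultimately have "f (p - d) = p - m * d" "f (p - d) = p - m' * d" by simp_all
  hence "m' * d = m * d" by simp
  thus "m' = m" using \<open>d > 0\<close> by simp
qed

lemma rslope_rep:
  assumes "PL_homeo_I f" "f p = p"
  shows "\<exists>e>0. \<forall>x. p \<le> x \<and> x \<le> p + e \<longrightarrow> f x = p + rslope f p * (x - p)"
  using rrep_ex[OF assms] rslope_eq by metis

lemma lslope_rep:
  assumes "PL_homeo_I f" "f p = p"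
  shows "\<exists>e>0. \<forall>x. p - e \<le> x \<and> x \<le> p \<longrightarrow> f x = p + lslope f p * (x - p)"
  using lrep_ex[OF assms] lslope_eq by metis

lemma rslope_pos:
  assumes f: "PL_homeo_I f" "f p = p" shows "rslope f p > 0"
proof -
  obtain e where e: "e > 0" "\<forall>x. p \<le> x \<and> x \<le> p + e \<longrightarrow> f x = p + rslope f p * (x - p)"
    using rslope_rep[OF assms] by blast
  have "f p < f (p + e)" using PL_mono[OF f(1)] e(1) by (simp add: strict_mono_less)
  hence "0 < rslope f p * e" using e f(2) by auto
  thus ?thesis using e(1) by (simp add: zero_less_mult_iff)
qed

lemma lslope_pos:
  assumes f: "PL_homeo_I f" "f p = p" shows "lslope f p > 0"
proof -
  obtain e where e: "e > 0" "\<forall>x. p - e \<le> x \<and> x \<le> p \<longrightarrow> f x = p + lslope f p * (x - p)"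
    using lslope_rep[OF assms] by blast
  have "f (p - e) < f p" using PL_mono[OF f(1)] e(1) by (simp add: strict_mono_less)
  hence "0 < lslope f p * e" using e f(2) by auto
  thus ?thesis using e(1) by (simp add: zero_less_mult_iff)
qed

lemma rslope_comp:
  assumes f: "PL_homeo_I f" "f p = p" and g: "PL_homeo_I g" "g p = p"
  shows "rslope (f \<circ> g) p = rslope f p * rslope g p"
proof -
  obtain e1 where e1: "e1 > 0" "\<forall>x. p \<le> x \<and> x \<le> p + e1 \<longrightarrow> f x = p + rslope f p * (x - p)"
    using rslope_rep[OF f] by blast
  obtain e2 where e2: "e2 > 0" "\<forall>x. p \<le> x \<and> x \<le> p + e2 \<longrightarrow> g x = p + rslope g p * (x - p)"
    using rslope_rep[OF g] by blast
  have m2: "rslope g p > 0" using rslope_pos[OF g] .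
  define d where "d = min e2 (e1 / rslope g p)"
  have d: "d > 0" using e1 e2 m2 by (simp add: d_def)
  have "\<forall>x. p \<le> x \<and> x \<le> p + d \<longrightarrow> (f \<circ> g) x = p + (rslope f p * rslope g p) * (x - p)"
  proof (intro allI impI)
    fix x assume x: "p \<le> x \<and> x \<le> p + d"
    have gx: "g x = p + rslope g p * (x - p)" using e2 x by (auto simp: d_def)
    have "rslope g p * (x - p) \<le> rslope g p * (e1 / rslope g p)"
      using x m2 by (intro mult_left_mono) (auto simp: d_def)
    hence "rslope g p * (x - p) \<le> e1" using m2 by simp
    moreover have "0 \<le> rslope g p * (x - p)" using x m2 by simp
    ultimately have "f (g x) = p + rslope f p * (rslope g p * (x - p))" using e1 gx by auto
    thus "(f \<circ> g) x = p + (rslope f p * rslope g p) * (x - p)" by simp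
  qed
  thus ?thesis using rslope_eq d by blast
qed

lemma lslope_comp:
  assumes f: "PL_homeo_I f" "f p = p" and g: "PL_homeo_I g" "g p = p"
  shows "lslope (f \<circ> g) p = lslope f p * lslope g p"
proof -
  obtain e1 where e1: "e1 > 0" "\<forall>x. p - e1 \<le> x \<and> x \<le> p \<longrightarrow> f x = p + lslope f p * (x - p)"
    using lslope_rep[OF f] by blast
  obtain e2 where e2: "e2 > 0" "\<forall>x. p - e2 \<le> x \<and> x \<le> p \<longrightarrow> g x = p + lslope g p * (x - p)"
    using lslope_rep[OF g] by blast
  have m2: "lslope g p > 0" using lslope_pos[OF g] .
  define d where "d = min e2 (e1 / lslope g p)"
  have d: "d > 0" using e1 e2 m2 by (simp add: d_def)
  have "\<forall>x. p - d \<le> x \<and> x \<le> p \<longrightarrow> (f \<circ> g) x = p + (lslope f p * lslope g p) * (x - p)"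
  proof (intro allI impI)
    fix x assume x: "p - d \<le> x \<and> x \<le> p"
    have gx: "g x = p + lslope g p * (x - p)" using e2 x by (auto simp: d_def)
    have "lslope g p * (p - x) \<le> lslope g p * (e1 / lslope g p)"
      using x m2 by (intro mult_left_mono) (auto simp: d_def)
    hence "lslope g p * (p - x) \<le> e1" using m2 by simp
    moreover have "0 \<le> lslope g p * (p - x)" using x m2 by simp
    ultimately have u: "p - e1 \<le> g x" "g x \<le> p" using gx by (auto simp: algebra_simps)
    have "f (g x) = p + lslope f p * (g x - p)" using e1 u by auto
    hence "f (g x) = p + lslope f p * (lslope g p * (x - p))" using gx by simp
    thus "(f \<circ> g) x = p + (lslope f p * lslope g p) * (x - p)" by simp
  qed
  thus ?thesis using lslope_eq d by blast
qed

lemma rslope_id: "rslope id p = 1"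
  by (rule rslope_eq[of 1]) auto

lemma lslope_id: "lslope id p = 1"
  by (rule lslope_eq[of 1]) auto

lemma invP_fix:
  assumes "PL_homeo_I f" "f p = p" shows "(inv\<^bsub>PLoI\<^esub> f) p = p"
  using inv_PLoI_app1[OF assms(1), of p] assms(2) by simp

lemma invP_PL: assumes "PL_homeo_I f" shows "PL_homeo_I (inv\<^bsub>PLoI\<^esub> f)"
  using inv_PLoI[OF assms] PL_inv[OF assms] by simp

lemma invP_comp: assumes "PL_homeo_I f" shows "(inv\<^bsub>PLoI\<^esub> f) \<circ> f = id"
  using inv_PLoI_app1[OF assms] by auto

lemma rslope_inv:
  assumes "PL_homeo_I f" "f p = p" shows "rslope (inv\<^bsub>PLoI\<^esub> f) p = 1 / rslope f p"
proof -
  have "rslope (inv\<^bsub>PLoI\<^esub> f) p * rslope f p = 1"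
    using rslope_comp[OF invP_PL[OF assms(1)] invP_fix[OF assms] assms] invP_comp[OF assms(1)] rslope_id
    by simp
  thus ?thesis using rslope_pos[OF assms] by (simp add: field_simps)
qed

lemma lslope_inv:
  assumes "PL_homeo_I f" "f p = p" shows "lslope (inv\<^bsub>PLoI\<^esub> f) p = 1 / lslope f p"
proof -
  have "lslope (inv\<^bsub>PLoI\<^esub> f) p * lslope f p = 1"
    using lslope_comp[OF invP_PL[OF assms(1)] invP_fix[OF assms] assms] invP_comp[OF assms(1)] lslope_id
    by simp
  thus ?thesis using lslope_pos[OF assms] by (simp add: field_simps)
qed

lemma rslope_one:
  assumes "PL_homeo_I f" "f p = p" "rslope f p = 1"
  shows "\<exists>e>0. \<forall>x. p \<le> x \<and> x \<le> p + e \<longrightarrow> f x = x"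
  using rslope_rep[OF assms(1,2)] assms(3) by auto

lemma lslope_one:
  assumes "PL_homeo_I f" "f p = p" "lslope f p = 1"
  shows "\<exists>e>0. \<forall>x. p - e \<le> x \<and> x \<le> p \<longrightarrow> f x = x"
  using lslope_rep[OF assms(1,2)] assms(3) by auto

definition Fixset :: "(real \<Rightarrow> real) set \<Rightarrow> real set" where
  "Fixset K = {p. \<forall>k\<in>K. k p = p}"

definition Zg :: "(real \<Rightarrow> real) set \<Rightarrow> real set \<Rightarrow> (real \<Rightarrow> real) set" where
  "Zg K P = {g\<in>K. \<forall>p\<in>P. rslope g p = 1 \<and> lslope g p = 1}"

lemma Zg_subgroup:
  assumes K: "subgroup K PLoI" and fx: "\<And>k p. k \<in> K \<Longrightarrow> p \<in> P \<Longrightarrow> k p = p"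
  shows "subgroup (Zg K P) PLoI"
proof (rule group.subgroupI[OF group_PLoI])
  have KC: "\<And>k. k \<in> K \<Longrightarrow> PL_homeo_I k" using subgroup.subset[OF K] by auto
  show "Zg K P \<subseteq> carrier PLoI" using subgroup.subset[OF K] by (auto simp: Zg_def)
  show "Zg K P \<noteq> {}" using subgroup.one_closed[OF K] rslope_id lslope_id
    by (auto simp: Zg_def)
  fix a assume a: "a \<in> Zg K P"
  hence aK: "a \<in> K" by (simp add: Zg_def)
  show "inv\<^bsub>PLoI\<^esub> a \<in> Zg K P"
    using a subgroup.m_inv_closed[OF K aK] rslope_inv[OF KC[OF aK]] lslope_inv[OF KC[OF aK]] fx[OF aK]
    by (auto simp: Zg_def)
  fix b assume b: "b \<in> Zg K P"
  hence bK: "b \<in> K" by (simp add: Zg_def)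
  show "a \<otimes>\<^bsub>PLoI\<^esub> b \<in> Zg K P"
    using a b subgroup.m_closed[OF K aK bK] rslope_comp[OF KC[OF aK] _ KC[OF bK]]
      lslope_comp[OF KC[OF aK] _ KC[OF bK]] fx[OF aK] fx[OF bK]
    by (auto simp: Zg_def)
qed

lemma derived_Zg:
  assumes K: "subgroup K PLoI" and fx: "\<And>k p. k \<in> K \<Longrightarrow> p \<in> P \<Longrightarrow> k p = p"
  shows "derived PLoI K \<subseteq> Zg K P"
  unfolding derived_def
proof (rule group.generate_subgroup_incl[OF group_PLoI])
  show "subgroup (Zg K P) PLoI" by (rule Zg_subgroup[OF K]) (simp add: fx)
  have KC: "\<And>k. k \<in> K \<Longrightarrow> PL_homeo_I k" using subgroup.subset[OF K] by auto
  show "derived_set PLoI K \<subseteq> Zg K P"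
  proof
    fix y assume "y \<in> derived_set PLoI K"
    then obtain h1 h2 where h: "h1 \<in> K" "h2 \<in> K"
      and y: "y = h1 \<otimes>\<^bsub>PLoI\<^esub> h2 \<otimes>\<^bsub>PLoI\<^esub> inv\<^bsub>PLoI\<^esub> h1 \<otimes>\<^bsub>PLoI\<^esub> inv\<^bsub>PLoI\<^esub> h2" by blast
    have yK: "y \<in> K" using y h subgroup.m_closed[OF K] subgroup.m_inv_closed[OF K] by simp
    have "rslope y p = 1 \<and> lslope y p = 1" if p: "p \<in> P" for p
    proof -
      note P1 = KC[OF h(1)] and P2 = KC[OF h(2)]
      note F1 = fx[OF h(1) p] and F2 = fx[OF h(2) p]
      note I1 = invP_PL[OF P1] and I2 = invP_PL[OF P2]
      note G1 = invP_fix[OF P1 F1] and G2 = invP_fix[OF P2 F2]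
      have y': "y = h1 \<circ> h2 \<circ> inv\<^bsub>PLoI\<^esub> h1 \<circ> inv\<^bsub>PLoI\<^esub> h2" using y by simp
      have c12: "PL_homeo_I (h1 \<circ> h2)" "(h1 \<circ> h2) p = p" using PL_comp[OF P1 P2] F1 F2 by auto
      have c123: "PL_homeo_I (h1 \<circ> h2 \<circ> inv\<^bsub>PLoI\<^esub> h1)" "(h1 \<circ> h2 \<circ> inv\<^bsub>PLoI\<^esub> h1) p = p"
        using PL_comp[OF c12(1) I1] c12(2) G1 by auto
      have r: "rslope y p = rslope h1 p * rslope h2 p * (1 / rslope h1 p) * (1 / rslope h2 p)"
        unfolding y' rslope_comp[OF c123 I2 G2] rslope_comp[OF c12 I1 G1] rslope_comp[OF P1 F1 P2 F2]
          rslope_inv[OF P1 F1] rslope_inv[OF P2 F2] ..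
      have l: "lslope y p = lslope h1 p * lslope h2 p * (1 / lslope h1 p) * (1 / lslope h2 p)"
        unfolding y' lslope_comp[OF c123 I2 G2] lslope_comp[OF c12 I1 G1] lslope_comp[OF P1 F1 P2 F2]
          lslope_inv[OF P1 F1] lslope_inv[OF P2 F2] ..
      show ?thesis using r l rslope_pos[OF P1 F1] rslope_pos[OF P2 F2] lslope_pos[OF P1 F1] lslope_pos[OF P2 F2]
        by simp
    qed
    thus "y \<in> Zg K P" using yK by (simp add: Zg_def)
  qed
qed

abbreviation ivP :: "(real \<Rightarrow> real) \<Rightarrow> real \<Rightarrow> real" where "ivP f \<equiv> m_inv PLoI f"

lemma subK_PL: "subgroup K PLoI \<Longrightarrow> k \<in> K \<Longrightarrow> PL_homeo_I k"
  using subgroup.subset by fastforce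

lemma ivP_K: "subgroup K PLoI \<Longrightarrow> k \<in> K \<Longrightarrow> ivP k \<in> K"
  using subgroup.m_inv_closed by fastforce

lemma comp_K: "subgroup K PLoI \<Longrightarrow> k \<in> K \<Longrightarrow> h \<in> K \<Longrightarrow> k \<circ> h \<in> K"
  using subgroup.m_closed by fastforce

lemma orbit_sup_fixed:
  assumes K: "subgroup K PLoI" and bd: "bdd_above ((\<lambda>k. k q) ` K)"
  and k: "k \<in> K"
  shows "k (Sup ((\<lambda>k. k q) ` K)) \<le> Sup ((\<lambda>k. k q) ` K)"
proof (rule ccontr)
  let ?O = "(\<lambda>k. k q) ` K" let ?b = "Sup ?O"
  assume "\<not> k ?b \<le> ?b"
  hence lt: "?b < k ?b" by simp
  have ne: "?O \<noteq> {}" using subgroup.one_closed[OF K] by auto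
  have "isCont k ?b" using PL_isCont[OF subK_PL[OF K k]] .
  hence "\<forall>e>0. \<exists>d>0. \<forall>x'. dist x' ?b < d \<longrightarrow> dist (k x') (k ?b) < e"
    unfolding continuous_at_eps_delta .
  moreover have "k ?b - ?b > 0" using lt by simp
  ultimately obtain d where d: "d > 0" "\<forall>x'. dist x' ?b < d \<longrightarrow> dist (k x') (k ?b) < k ?b - ?b"
    by blast
  have "?b - d < ?b" using d by simp
  then obtain t where t: "t \<in> ?O" "?b - d < t" using less_cSup_iff[OF ne bd] by blast
  have "t \<le> ?b" using cSup_upper[OF t(1) bd] .
  hence "dist t ?b < d" using t d by (simp add: dist_real_def)
  hence "dist (k t) (k ?b) < k ?b - ?b" using d by blast
  hence "k t > ?b" by (simp add: dist_real_def)
  moreover obtain h where h: "h \<in> K" "t = h q" using t by blast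
  have "k t \<in> ?O" by (rule rev_image_eqI[OF comp_K[OF K k h(1)]]) (simp add: h)
  hence "k t \<le> ?b" using cSup_upper[OF _ bd] by simp
  ultimately show False by simp
qed

lemma orbit_inf_fixed:
  assumes K: "subgroup K PLoI" and bd: "bdd_below ((\<lambda>k. k q) ` K)"
  and k: "k \<in> K"
  shows "k (Inf ((\<lambda>k. k q) ` K)) \<ge> Inf ((\<lambda>k. k q) ` K)"
proof (rule ccontr)
  let ?O = "(\<lambda>k. k q) ` K" let ?b = "Inf ?O"
  assume "\<not> k ?b \<ge> ?b"
  hence lt: "k ?b < ?b" by simp
  have ne: "?O \<noteq> {}" using subgroup.one_closed[OF K] by auto
  have "isCont k ?b" using PL_isCont[OF subK_PL[OF K k]] .
  hence "\<forall>e>0. \<exists>d>0. \<forall>x'. dist x' ?b < d \<longrightarrow> dist (k x') (k ?b) < e"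
    unfolding continuous_at_eps_delta .
  moreover have "?b - k ?b > 0" using lt by simp
  ultimately obtain d where d: "d > 0" "\<forall>x'. dist x' ?b < d \<longrightarrow> dist (k x') (k ?b) < ?b - k ?b"
    by blast
  have "?b < ?b + d" using d by simp
  then obtain t where t: "t \<in> ?O" "t < ?b + d" using cInf_less_iff[OF ne bd] by blast
  have "?b \<le> t" using cInf_lower[OF t(1) bd] .
  hence "dist t ?b < d" using t d by (simp add: dist_real_def)
  hence "dist (k t) (k ?b) < ?b - k ?b" using d by blast
  hence "k t < ?b" by (simp add: dist_real_def)
  moreover obtain h where h: "h \<in> K" "t = h q" using t by blast
  have "k t \<in> ?O" by (rule rev_image_eqI[OF comp_K[OF K k h(1)]]) (simp add: h)
  hence "?b \<le> k t" using cInf_lower[OF _ bd] by simp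
  ultimately show False by simp
qed

lemma fixed_from_le:
  assumes K: "subgroup K PLoI" and le: "\<And>k. k \<in> K \<Longrightarrow> k b \<le> b" and k: "k \<in> K"
  shows "k b = b"
proof -
  have P: "PL_homeo_I k" using subK_PL[OF K k] .
  have "ivP k b \<le> b" using le[OF ivP_K[OF K k]] .
  hence "k (ivP k b) \<le> k b" using PL_mono[OF P] by (simp add: strict_mono_less_eq)
  hence "b \<le> k b" using inv_PLoI_app2[OF P] by simp
  thus ?thesis using le[OF k] by simp
qed

lemma fixed_from_ge:
  assumes K: "subgroup K PLoI" and le: "\<And>k. k \<in> K \<Longrightarrow> k b \<ge> b" and k: "k \<in> K"
  shows "k b = b"
proof -
  have P: "PL_homeo_I k" using subK_PL[OF K k] .
  have "ivP k b \<ge> b" using le[OF ivP_K[OF K k]] .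
  hence "k (ivP k b) \<ge> k b" using PL_mono[OF P] by (simp add: strict_mono_less_eq)
  hence "b \<ge> k b" using inv_PLoI_app2[OF P] by simp
  thus ?thesis using le[OF k] by simp
qed

lemma orbital:
  assumes K: "subgroup K PLoI" and y: "y \<in> K" and yq: "y q \<noteq> q"
  shows "\<exists>a b. a < q \<and> q < b \<and> a \<in> Fixset K \<and> b \<in> Fixset K \<and>
     (\<forall>c d. a < c \<longrightarrow> d < b \<longrightarrow> (\<exists>g\<in>K. d < g c))"
proof -
  let ?O = "(\<lambda>k. k q) ` K"
  define a where "a = Inf ?O"
  define b where "b = Sup ?O"
  have Py: "PL_homeo_I y" using subK_PL[OF K y] .
  have q01: "q \<in> {0..1}" using yq PL_D(5)[OF Py] by blast
  have O01: "?O \<subseteq> {0..1}" using PL_range[OF subK_PL[OF K] q01] by auto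
  have ba: "bdd_above ?O" using O01 by (meson bdd_above_Icc bdd_above_mono)
  have bb: "bdd_below ?O" using O01 by (meson bdd_below_Icc bdd_below_mono)
  have ne: "?O \<noteq> {}" using subgroup.one_closed[OF K] by auto
  have bfix: "b \<in> Fixset K" unfolding Fixset_def
  proof (intro CollectI ballI)
    fix k assume k: "k \<in> K"
    show "k b = b" by (rule fixed_from_le[OF K _ k]) (unfold b_def, rule orbit_sup_fixed[OF K ba])
  qed
  have afix: "a \<in> Fixset K" unfolding Fixset_def
  proof (intro CollectI ballI)
    fix k assume k: "k \<in> K"
    show "k a = a" by (rule fixed_from_ge[OF K _ k]) (unfold a_def, rule orbit_inf_fixed[OF K bb])
  qed
  have Piy: "PL_homeo_I (ivP y)" using subK_PL[OF K ivP_K[OF K y]] .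
  have yiy: "y (ivP y q) = q" using inv_PLoI_app2[OF Py] .
  have "\<exists>t\<in>?O. q < t" "\<exists>t\<in>?O. t < q"
  proof -
    have "(y q > q \<and> ivP y q < q) \<or> (y q < q \<and> ivP y q > q)"
    proof (cases "y q > q")
      case True
      have "ivP y q < q"
      proof (rule ccontr)
        assume "\<not> ivP y q < q"
        hence "y q \<le> y (ivP y q)" using PL_mono[OF Py] by (simp add: strict_mono_less_eq)
        thus False using True yiy by simp
      qed
      thus ?thesis using True by simp
    next
      case False
      hence lt: "y q < q" using yq by simp
      have "ivP y q > q"
      proof (rule ccontr)
        assume "\<not> ivP y q > q"
        hence "y (ivP y q) \<le> y q" using PL_mono[OF Py] by (simp add: strict_mono_less_eq)
        thus False using lt yiy by simp
      qed
      thus ?thesis using lt by simp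
    qed
    moreover have "y q \<in> ?O" "ivP y q \<in> ?O" using y ivP_K[OF K y] by auto
    ultimately show "\<exists>t\<in>?O. q < t" "\<exists>t\<in>?O. t < q" by blast+
  qed
  hence qb: "q < b" and aq: "a < q" unfolding a_def b_def using less_cSup_iff[OF ne ba] cInf_less_iff[OF ne bb]
    by blast+
  have gex: "\<exists>g\<in>K. d < g c" if c: "a < c" and d: "d < b" for c d
  proof -
    obtain t1 where t1: "t1 \<in> ?O" "t1 < c" using cInf_less_iff[OF ne bb] c a_def by blast
    obtain t2 where t2: "t2 \<in> ?O" "d < t2" using less_cSup_iff[OF ne ba] d b_def by blast
    obtain k1 where k1: "k1 \<in> K" "t1 = k1 q" using t1 by blast
    obtain k2 where k2: "k2 \<in> K" "t2 = k2 q" using t2 by blast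
    have P1: "PL_homeo_I k1" using subK_PL[OF K k1(1)] .
    have P2: "PL_homeo_I k2" using subK_PL[OF K k2(1)] .
    have "k1 q < k1 (ivP k1 c)" using inv_PLoI_app2[OF P1] t1 k1 by simp
    hence "q < ivP k1 c" using PL_mono[OF P1] by (simp add: strict_mono_less)
    hence "k2 q < k2 (ivP k1 c)" using PL_mono[OF P2] by (simp add: strict_mono_less)
    hence "d < (k2 \<circ> ivP k1) c" using t2 k2 by simp
    moreover have "k2 \<circ> ivP k1 \<in> K" using comp_K[OF K k2(1) ivP_K[OF K k1(1)]] .
    ultimately show ?thesis by blast
  qed
  show ?thesis using aq qb afix bfix gex by blast
qed

definition Agree :: "real \<Rightarrow> real \<Rightarrow> (real \<Rightarrow> real) \<Rightarrow> (real \<Rightarrow> real) \<Rightarrow> bool" where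
  "Agree c d y w \<longleftrightarrow> y c = c \<and> y d = d \<and> (\<forall>t. c \<le> t \<and> t \<le> d \<longrightarrow> w t = y t)"

lemma Agree_comp:
  assumes "PL_homeo_I y1" "PL_homeo_I y2" "Agree c d y1 w1" "Agree c d y2 w2"
  shows "Agree c d (y1 \<circ> y2) (w1 \<circ> w2)"
  unfolding Agree_def
proof (intro conjI allI impI)
  show "(y1 \<circ> y2) c = c" "(y1 \<circ> y2) d = d" using assms(3,4) by (auto simp: Agree_def)
  fix t assume t: "c \<le> t \<and> t \<le> d"
  have "y2 c \<le> y2 t" "y2 t \<le> y2 d" using t PL_mono[OF assms(2)] by (auto simp: strict_mono_less_eq)
  hence "c \<le> y2 t" "y2 t \<le> y2 d" "y2 d = d" using assms(4) by (auto simp: Agree_def)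
  thus "(w1 \<circ> w2) t = (y1 \<circ> y2) t" using assms(3,4) t by (auto simp: Agree_def)
qed

lemma Agree_inv:
  assumes "PL_homeo_I y" "PL_homeo_I w" "Agree c d y w"
  shows "Agree c d (ivP y) (ivP w)"
  unfolding Agree_def
proof (intro conjI allI impI)
  have yc: "y c = c" and yd: "y d = d" using assms(3) by (auto simp: Agree_def)
  show ic: "ivP y c = c" "ivP y d = d" using invP_fix[OF assms(1)] yc yd by auto
  fix t assume t: "c \<le> t \<and> t \<le> d"
  have m: "strict_mono (ivP y)" using PL_mono[OF invP_PL[OF assms(1)]] .
  have "ivP y c \<le> ivP y t" "ivP y t \<le> ivP y d" using t m by (auto simp: strict_mono_less_eq)
  hence u: "c \<le> ivP y t" "ivP y t \<le> d" using ic by auto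
  have "w (ivP y t) = y (ivP y t)" using assms(3) u by (auto simp: Agree_def)
  also have "\<dots> = t" using inv_PLoI_app2[OF assms(1)] .
  finally have "ivP w t = ivP w (w (ivP y t))" by simp
  also have "\<dots> = ivP y t" using inv_PLoI_app1[OF assms(2)] .
  finally show "ivP w t = ivP y t" .
qed

definition Rw :: "(real \<Rightarrow> real) set \<Rightarrow> real \<Rightarrow> real \<Rightarrow> (real \<Rightarrow> real) set \<Rightarrow> (real \<Rightarrow> real) \<Rightarrow> bool" where
  "Rw K a b W y \<longleftrightarrow> (\<exists>c0 d0. a < c0 \<and> c0 < d0 \<and> d0 < b \<and>
     (\<forall>t. a < t \<and> t \<le> c0 \<longrightarrow> y t = t) \<and> (\<forall>t. d0 \<le> t \<and> t < b \<longrightarrow> y t = t) \<and>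
     (\<forall>c d g. a < c \<longrightarrow> c \<le> c0 \<longrightarrow> d0 \<le> d \<longrightarrow> d < b \<longrightarrow> g \<in> K \<longrightarrow> d < g c \<longrightarrow>
        (\<exists>w\<in>W. Agree c d y w)))"

lemma Rw_id:
  assumes "a < b" "id \<in> W" shows "Rw K a b W id"
  unfolding Rw_def
proof (rule exI[of _ "a + (b - a)/3"], rule exI[of _ "b - (b - a)/3"], intro conjI allI impI)
  show "a < a + (b - a)/3" "a + (b - a)/3 < b - (b - a)/3" "b - (b - a)/3 < b" using assms(1) by (auto simp: field_simps)
  show "id t = t" for t by simp
  show "id t = t" for t by simp
  show "\<exists>w\<in>W. Agree c d id w" for c d by (rule bexI[OF _ assms(2)]) (simp add: Agree_def)
qed

lemma Rw_comp:
  assumes W: "subgroup W PLoI" and P: "PL_homeo_I y1" "PL_homeo_I y2"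
    and R: "Rw K a b W y1" "Rw K a b W y2"
  shows "Rw K a b W (y1 \<circ> y2)"
proof -
  obtain c1 d1 where 1: "a < c1" "c1 < d1" "d1 < b" "\<forall>t. a < t \<and> t \<le> c1 \<longrightarrow> y1 t = t"
    "\<forall>t. d1 \<le> t \<and> t < b \<longrightarrow> y1 t = t"
    "\<forall>c d g. a < c \<longrightarrow> c \<le> c1 \<longrightarrow> d1 \<le> d \<longrightarrow> d < b \<longrightarrow> g \<in> K \<longrightarrow> d < g c \<longrightarrow> (\<exists>w\<in>W. Agree c d y1 w)"
    using R(1) unfolding Rw_def by blast
  obtain c2 d2 where 2: "a < c2" "c2 < d2" "d2 < b" "\<forall>t. a < t \<and> t \<le> c2 \<longrightarrow> y2 t = t"
    "\<forall>t. d2 \<le> t \<and> t < b \<longrightarrow> y2 t = t"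
    "\<forall>c d g. a < c \<longrightarrow> c \<le> c2 \<longrightarrow> d2 \<le> d \<longrightarrow> d < b \<longrightarrow> g \<in> K \<longrightarrow> d < g c \<longrightarrow> (\<exists>w\<in>W. Agree c d y2 w)"
    using R(2) unfolding Rw_def by blast
  show ?thesis unfolding Rw_def
  proof (rule exI[of _ "min c1 c2"], rule exI[of _ "max d1 d2"], intro conjI allI impI)
    show "a < min c1 c2" "min c1 c2 < max d1 d2" "max d1 d2 < b" using 1 2 by auto
    show "(y1 \<circ> y2) t = t" if "a < t \<and> t \<le> min c1 c2" for t using that 1(4) 2(4) by auto
    show "(y1 \<circ> y2) t = t" if "max d1 d2 \<le> t \<and> t < b" for t using that 1(5) 2(5) by auto
  next
    fix c d g assume h: "a < c" "c \<le> min c1 c2" "max d1 d2 \<le> d" "d < b" "g \<in> K" "d < g c"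
    have hh: "c \<le> c1" "c \<le> c2" "d1 \<le> d" "d2 \<le> d" using h(2,3) by auto
    obtain w1 where w1: "w1 \<in> W" "Agree c d y1 w1" using 1(6) h hh by blast
    obtain w2 where w2: "w2 \<in> W" "Agree c d y2 w2" using 2(6) h hh by blast
    have "w1 \<circ> w2 \<in> W" using subgroup.m_closed[OF W w1(1) w2(1)] by simp
    thus "\<exists>w\<in>W. Agree c d (y1 \<circ> y2) w" using Agree_comp[OF P w1(2) w2(2)] by blast
  qed
qed

lemma Rw_inv:
  assumes W: "subgroup W PLoI" and P: "PL_homeo_I y" and R: "Rw K a b W y"
  shows "Rw K a b W (ivP y)"
proof -
  obtain c1 d1 where 1: "a < c1" "c1 < d1" "d1 < b" "\<forall>t. a < t \<and> t \<le> c1 \<longrightarrow> y t = t"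
    "\<forall>t. d1 \<le> t \<and> t < b \<longrightarrow> y t = t"
    "\<forall>c d g. a < c \<longrightarrow> c \<le> c1 \<longrightarrow> d1 \<le> d \<longrightarrow> d < b \<longrightarrow> g \<in> K \<longrightarrow> d < g c \<longrightarrow> (\<exists>w\<in>W. Agree c d y w)"
    using R unfolding Rw_def by blast
  have fx: "ivP y t = t" if "y t = t" for t using inv_PLoI_app1[OF P, of t] that by simp
  show ?thesis unfolding Rw_def
  proof (rule exI[of _ c1], rule exI[of _ d1], intro conjI allI impI)
    show "a < c1" "c1 < d1" "d1 < b" using 1 by auto
    show "ivP y t = t" if "a < t \<and> t \<le> c1" for t using that 1(4) fx by auto
    show "ivP y t = t" if "d1 \<le> t \<and> t < b" for t using that 1(5) fx by auto
  next
    fix c d g assume h: "a < c" "c \<le> c1" "d1 \<le> d" "d < b" "g \<in> K" "d < g c"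
    obtain w where w: "w \<in> W" "Agree c d y w" using 1(6) h by blast
    have Pw: "PL_homeo_I w" using subgroup.subset[OF W] w(1) by auto
    have "ivP w \<in> W" using subgroup.m_inv_closed[OF W w(1)] .
    thus "\<exists>w\<in>W. Agree c d (ivP y) w" using Agree_inv[OF P Pw w(2)] by blast
  qed
qed

lemma comm_eq: "y1 \<otimes>\<^bsub>PLoI\<^esub> y2 \<otimes>\<^bsub>PLoI\<^esub> ivP y1 \<otimes>\<^bsub>PLoI\<^esub> ivP y2 = y1 \<circ> y2 \<circ> ivP y1 \<circ> ivP y2"
  by simp

lemma comm_in_derived:
  assumes "y1 \<in> X" "y2 \<in> X" shows "y1 \<circ> y2 \<circ> ivP y1 \<circ> ivP y2 \<in> derived PLoI X"
proof -
  have "y1 \<otimes>\<^bsub>PLoI\<^esub> y2 \<otimes>\<^bsub>PLoI\<^esub> ivP y1 \<otimes>\<^bsub>PLoI\<^esub> ivP y2 \<in> derived_set PLoI X"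
    using assms by blast
  thus ?thesis unfolding derived_def comm_eq by (rule generate.incl)
qed

lemma Rw_comm:
  assumes W: "subgroup W PLoI" and P: "PL_homeo_I y1" "PL_homeo_I y2"
    and R: "Rw K a b W y1" "Rw K a b W y2"
  shows "Rw K a b (derived PLoI W) (y1 \<circ> y2 \<circ> ivP y1 \<circ> ivP y2)"
proof -
  obtain c1 d1 where 1: "a < c1" "c1 < d1" "d1 < b" "\<forall>t. a < t \<and> t \<le> c1 \<longrightarrow> y1 t = t"
    "\<forall>t. d1 \<le> t \<and> t < b \<longrightarrow> y1 t = t"
    "\<forall>c d g. a < c \<longrightarrow> c \<le> c1 \<longrightarrow> d1 \<le> d \<longrightarrow> d < b \<longrightarrow> g \<in> K \<longrightarrow> d < g c \<longrightarrow> (\<exists>w\<in>W. Agree c d y1 w)"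
    using R(1) unfolding Rw_def by blast
  obtain c2 d2 where 2: "a < c2" "c2 < d2" "d2 < b" "\<forall>t. a < t \<and> t \<le> c2 \<longrightarrow> y2 t = t"
    "\<forall>t. d2 \<le> t \<and> t < b \<longrightarrow> y2 t = t"
    "\<forall>c d g. a < c \<longrightarrow> c \<le> c2 \<longrightarrow> d2 \<le> d \<longrightarrow> d < b \<longrightarrow> g \<in> K \<longrightarrow> d < g c \<longrightarrow> (\<exists>w\<in>W. Agree c d y2 w)"
    using R(2) unfolding Rw_def by blast
  have fx1: "ivP y1 t = t" if "y1 t = t" for t using inv_PLoI_app1[OF P(1), of t] that by simp
  have fx2: "ivP y2 t = t" if "y2 t = t" for t using inv_PLoI_app1[OF P(2), of t] that by simp
  show ?thesis unfolding Rw_def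
  proof (rule exI[of _ "min c1 c2"], rule exI[of _ "max d1 d2"], intro conjI allI impI)
    show "a < min c1 c2" "min c1 c2 < max d1 d2" "max d1 d2 < b" using 1 2 by auto
    show "(y1 \<circ> y2 \<circ> ivP y1 \<circ> ivP y2) t = t" if "a < t \<and> t \<le> min c1 c2" for t using that 1(4) 2(4) fx1 fx2 by auto
    show "(y1 \<circ> y2 \<circ> ivP y1 \<circ> ivP y2) t = t" if "max d1 d2 \<le> t \<and> t < b" for t using that 1(5) 2(5) fx1 fx2 by auto
  next
    fix c d g assume h: "a < c" "c \<le> min c1 c2" "max d1 d2 \<le> d" "d < b" "g \<in> K" "d < g c"
    have hh: "c \<le> c1" "c \<le> c2" "d1 \<le> d" "d2 \<le> d" using h(2,3) by auto
    obtain w1 where w1: "w1 \<in> W" "Agree c d y1 w1" using 1(6) h hh by blast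
    obtain w2 where w2: "w2 \<in> W" "Agree c d y2 w2" using 2(6) h hh by blast
    have Pw1: "PL_homeo_I w1" using subgroup.subset[OF W] w1(1) by auto
    have Pw2: "PL_homeo_I w2" using subgroup.subset[OF W] w2(1) by auto
    have A: "Agree c d (y1 \<circ> y2 \<circ> ivP y1 \<circ> ivP y2) (w1 \<circ> w2 \<circ> ivP w1 \<circ> ivP w2)"
      by (intro Agree_comp Agree_inv PL_comp invP_PL P w1(2) w2(2) Pw1 Pw2)
    have "w1 \<circ> w2 \<circ> ivP w1 \<circ> ivP w2 \<in> derived PLoI W" using comm_in_derived[OF w1(1) w2(1)] .
    thus "\<exists>w\<in>derived PLoI W. Agree c d (y1 \<circ> y2 \<circ> ivP y1 \<circ> ivP y2) w" using A by blast
  qed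
qed

lemma Rw_base:
  assumes K: "subgroup K PLoI" and ab: "a < b" "a \<in> Fixset K" "b \<in> Fixset K"
    and y: "y \<in> Zg K (Fixset K)"
  shows "Rw K a b (derived PLoI K) y"
proof -
  have yK: "y \<in> K" and sl: "rslope y a = 1" "lslope y b = 1" using y ab by (auto simp: Zg_def)
  have P: "PL_homeo_I y" using subK_PL[OF K yK] .
  have ya: "y a = a" and yb: "y b = b" using ab yK by (auto simp: Fixset_def)
  obtain e1 where e1: "e1 > 0" "\<forall>x. a \<le> x \<and> x \<le> a + e1 \<longrightarrow> y x = x" using rslope_one[OF P ya sl(1)] by blast
  obtain e2 where e2: "e2 > 0" "\<forall>x. b - e2 \<le> x \<and> x \<le> b \<longrightarrow> y x = x" using lslope_one[OF P yb sl(2)] by blast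
  define c0 where "c0 = a + min e1 ((b - a)/3)"
  define d0 where "d0 = b - min e2 ((b - a)/3)"
  have m1: "min e1 ((b - a)/3) \<le> (b - a)/3" "min e2 ((b - a)/3) \<le> (b - a)/3" by (rule min.cobounded2)+
  have m2: "min e1 ((b - a)/3) > 0" "min e2 ((b - a)/3) > 0" using e1 e2 ab by simp_all
  have c0: "a < c0" "c0 < d0" "d0 < b" unfolding c0_def d0_def using m1 m2 ab(1) by (auto simp: field_simps)
  have id1: "\<forall>t. a < t \<and> t \<le> c0 \<longrightarrow> y t = t" using e1 by (auto simp: c0_def)
  have id2: "\<forall>t. d0 \<le> t \<and> t < b \<longrightarrow> y t = t" using e2 by (auto simp: d0_def)
  have fx: "ivP y t = t" if "y t = t" for t using inv_PLoI_app1[OF P, of t] that by simp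
  show ?thesis unfolding Rw_def
  proof (rule exI[of _ c0], rule exI[of _ d0], intro conjI allI impI)
    show "a < c0" "c0 < d0" "d0 < b" using c0 by auto
    show "y t = t" if "a < t \<and> t \<le> c0" for t using id1 that by auto
    show "y t = t" if "d0 \<le> t \<and> t < b" for t using id2 that by auto
  next
    fix c d g assume h: "a < c" "c \<le> c0" "d0 \<le> d" "d < b" "g \<in> K" "d < g c"
    have Pg: "PL_homeo_I g" using subK_PL[OF K h(5)] .
    have ga: "g a = a" using ab h(5) by (auto simp: Fixset_def)
    have mi: "strict_mono (ivP g)" using PL_mono[OF invP_PL[OF Pg]] .
    let ?w = "y \<circ> g \<circ> ivP y \<circ> ivP g"
    have wD: "?w \<in> derived PLoI K" using comm_in_derived[OF yK h(5)] .
    have "Agree c d y ?w" unfolding Agree_def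
    proof (intro conjI allI impI)
      show "y c = c" "y d = d" using id1 id2 h c0 by auto
      fix t assume t: "c \<le> t \<and> t \<le> d"
      let ?s = "ivP g t"
      have "ivP g t \<le> ivP g d" using t mi by (simp add: strict_mono_less_eq)
      also have "ivP g d < ivP g (g c)" using h(6) mi by (simp add: strict_mono_less)
      also have "ivP g (g c) = c" using inv_PLoI_app1[OF Pg] .
      finally have s1: "?s < c" .
      have "a = ivP g a" using invP_fix[OF Pg ga] by simp
      also have "ivP g a < ivP g c" using h(1) mi by (simp add: strict_mono_less)
      also have "ivP g c \<le> ivP g t" using t mi by (simp add: strict_mono_less_eq)
      finally have s2: "a < ?s" .
      have "y ?s = ?s" using id1 s1 s2 h(2) by auto
      hence "ivP y ?s = ?s" using fx by simp
      hence "?w t = y (g ?s)" by simp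
      also have "g ?s = t" using inv_PLoI_app2[OF Pg] .
      finally show "?w t = y t" .
    qed
    thus "\<exists>w\<in>derived PLoI K. Agree c d y w" using wD by blast
  qed
qed

lemma derived_pow_subgroup:
  assumes "subgroup X PLoI" shows "subgroup ((derived PLoI ^^ j) X) PLoI"
  using group.exp_of_derived_is_subgroup[OF group_PLoI assms] .

lemma derived_pow_sub:
  assumes "subgroup X PLoI" shows "(derived PLoI ^^ j) X \<subseteq> X"
proof (induction j)
  case (Suc j)
  have "derived PLoI ((derived PLoI ^^ j) X) \<subseteq> X"
    using group.derived_incl[OF group_PLoI Suc assms] .
  thus ?case by simp
qed simp

lemma Rw_all:
  assumes K: "subgroup K PLoI" and ab: "a < b" "a \<in> Fixset K" "b \<in> Fixset K"
  shows "\<forall>y \<in> (derived PLoI ^^ j) (Zg K (Fixset K)). Rw K a b ((derived PLoI ^^ j) (derived PLoI K)) y"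
proof (induction j)
  case 0
  show ?case using Rw_base[OF assms] by simp
next
  case (Suc j)
  let ?L = "Zg K (Fixset K)"
  have Ls: "subgroup ?L PLoI" by (rule Zg_subgroup[OF K]) (auto simp: Fixset_def)
  let ?X = "(derived PLoI ^^ j) ?L"
  let ?W = "(derived PLoI ^^ j) (derived PLoI K)"
  have Xs: "subgroup ?X PLoI" using derived_pow_subgroup[OF Ls] .
  have DK: "subgroup (derived PLoI K) PLoI"
    using group.derived_is_subgroup[OF group_PLoI subgroup.subset[OF K]] .
  have Ws: "subgroup ?W PLoI" using derived_pow_subgroup[OF DK] .
  have W1s: "subgroup (derived PLoI ?W) PLoI"
    using group.derived_is_subgroup[OF group_PLoI subgroup.subset[OF Ws]] .
  have XP: "\<And>x. x \<in> ?X \<Longrightarrow> PL_homeo_I x" using subgroup.subset[OF Xs] by auto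
  have inclR: "Rw K a b (derived PLoI ?W) h" if h: "h \<in> derived_set PLoI ?X" for h
  proof -
    obtain h1 h2 where hh: "h1 \<in> ?X" "h2 \<in> ?X" "h = h1 \<otimes>\<^bsub>PLoI\<^esub> h2 \<otimes>\<^bsub>PLoI\<^esub> ivP h1 \<otimes>\<^bsub>PLoI\<^esub> ivP h2"
      using h by blast
    show ?thesis unfolding hh(3) comm_eq
      by (rule Rw_comm[OF Ws XP[OF hh(1)] XP[OF hh(2)]]) (use Suc hh in auto)
  qed
  have DP: "\<And>x. x \<in> derived_set PLoI ?X \<Longrightarrow> PL_homeo_I x"
    using group.derived_set_in_carrier[OF group_PLoI subgroup.subset[OF Xs]] by auto
  have GP: "\<And>x. x \<in> generate PLoI (derived_set PLoI ?X) \<Longrightarrow> PL_homeo_I x"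
    using group.generate_in_carrier[OF group_PLoI group.derived_set_in_carrier[OF group_PLoI subgroup.subset[OF Xs]]]
    by auto
  have "Rw K a b (derived PLoI ?W) y" if y: "y \<in> generate PLoI (derived_set PLoI ?X)" for y
    using y
  proof (induction rule: generate.induct)
    case one
    have "id \<in> derived PLoI ?W" using subgroup.one_closed[OF W1s] by (simp only: one_PLoI)
    then show ?case unfolding one_PLoI by (rule Rw_id[OF ab(1)])
  next
    case (incl h) thus ?case using inclR by blast
  next
    case (inv h) thus ?case using Rw_inv[OF W1s DP inclR] by blast
  next
    case (eng h1 h2)
    have "Rw K a b (derived PLoI ?W) (h1 \<circ> h2)" by (rule Rw_comp[OF W1s]) (use eng GP in auto)
    thus ?case by (simp only: mult_PLoI)
  qed
  thus ?case unfolding derived_def by simp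
qed

lemma lemmaX:
  assumes K: "subgroup K PLoI" and sol: "(derived PLoI ^^ Suc k) K = {id}"
  shows "(derived PLoI ^^ k) (Zg K (Fixset K)) = {id}"
proof -
  let ?L = "Zg K (Fixset K)"
  have Ls: "subgroup ?L PLoI" by (rule Zg_subgroup[OF K]) (auto simp: Fixset_def)
  let ?X = "(derived PLoI ^^ k) ?L"
  have Xs: "subgroup ?X PLoI" using derived_pow_subgroup[OF Ls] .
  have XL: "?X \<subseteq> ?L" using derived_pow_sub[OF Ls] .
  have W: "(derived PLoI ^^ k) (derived PLoI K) = {id}"
    using sol by (simp add: funpow_Suc_right del: funpow.simps)
  have "y = id" if y: "y \<in> ?X" for y
  proof (rule ext, rule ccontr)
    fix q assume yq: "\<not> y q = id q"
    have yK: "y \<in> K" using XL y by (auto simp: Zg_def)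
    obtain a b where ab: "a < q" "q < b" "a \<in> Fixset K" "b \<in> Fixset K"
      and gex: "\<forall>c d. a < c \<longrightarrow> d < b \<longrightarrow> (\<exists>g\<in>K. d < g c)"
      using orbital[OF K yK, of q] yq by auto
    have "Rw K a b ((derived PLoI ^^ k) (derived PLoI K)) y"
      using Rw_all[OF K _ ab(3,4), of k] ab y by auto
    then obtain c0 d0 where R: "a < c0" "c0 < d0" "d0 < b"
      "\<forall>c d g. a < c \<longrightarrow> c \<le> c0 \<longrightarrow> d0 \<le> d \<longrightarrow> d < b \<longrightarrow> g \<in> K \<longrightarrow> d < g c \<longrightarrow>
        (\<exists>w\<in>(derived PLoI ^^ k) (derived PLoI K). Agree c d y w)"
      unfolding Rw_def by blast
    define c where "c = min c0 q"
    define d where "d = max d0 q"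
    have cd: "a < c" "c \<le> c0" "d0 \<le> d" "d < b" "c \<le> q" "q \<le> d" using R ab by (auto simp: c_def d_def)
    obtain g where g: "g \<in> K" "d < g c" using gex cd by blast
    obtain w where w: "w \<in> (derived PLoI ^^ k) (derived PLoI K)" "Agree c d y w"
      using R(4) cd g by blast
    have "w = id" using w(1) W by simp
    hence "y q = q" using w(2) cd by (auto simp: Agree_def)
    thus False using yq by simp
  qed
  moreover have "id \<in> ?X" using subgroup.one_closed[OF Xs] by simp
  ultimately show ?thesis by blast
qed

lemma funpow_in_sub:
  assumes S: "subgroup S PLoI" and x: "x \<in> S" shows "x ^^ n \<in> S"
proof (induction n)
  case 0
  have "id \<in> S" using subgroup.one_closed[OF S] by simp
  thus ?case by (simp only: funpow_0 id_def[symmetric])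
next
  case (Suc n)
  have "(x ^^ n) \<circ> x \<in> S" using subgroup.m_closed[OF S Suc x] by simp
  thus ?case by (simp only: funpow_Suc_right)
qed

lemma funpow_gt:
  assumes m: "strict_mono (h::real \<Rightarrow> real)" and hp: "h p > p" shows "(h ^^ Suc n) p > p"
proof (induction n)
  case 0 thus ?case using hp by simp
next
  case (Suc n)
  have "h ((h ^^ Suc n) p) > h p" using Suc m by (simp add: strict_mono_less)
  thus ?case using hp by simp
qed

lemma funpow_lt:
  assumes m: "strict_mono (h::real \<Rightarrow> real)" and hp: "h p < p" shows "(h ^^ Suc n) p < p"
proof (induction n)
  case 0 thus ?case using hp by simp
next
  case (Suc n)
  have "h ((h ^^ Suc n) p) < h p" using Suc m by (simp add: strict_mono_less)
  thus ?case using hp by simp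
qed

lemma funpow_fix:
  assumes "PL_homeo_I h" "n > 0" "(h ^^ n) p = p" shows "h p = p"
proof -
  obtain m where n: "n = Suc m" using assms(2) by (cases n) auto
  have sm: "strict_mono h" using PL_mono[OF assms(1)] .
  show ?thesis
  proof (rule ccontr)
    assume "h p \<noteq> p"
    hence "h p > p \<or> h p < p" by auto
    thus False using funpow_gt[OF sm, of p m] funpow_lt[OF sm, of p m] assms(3) n by auto
  qed
qed

lemma main_ind:
  "\<forall>H K. subgroup H PLoI \<longrightarrow> subgroup K PLoI \<longrightarrow> K \<subseteq> H \<longrightarrow> (\<forall>h\<in>H. \<exists>n>0. h ^^ n \<in> K) \<longrightarrow>
     (derived PLoI ^^ k) K = {id} \<longrightarrow> (\<exists>n. (derived PLoI ^^ n) H = {id})"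
proof (induction k)
  case 0
  show ?case
  proof (intro allI impI)
    fix H K assume H: "subgroup H PLoI" and K: "subgroup K PLoI" and KH: "K \<subseteq> H"
      and pw: "\<forall>h\<in>H. \<exists>n>0. h ^^ n \<in> K" and d: "(derived PLoI ^^ 0) K = {id}"
    have "h = id" if h: "h \<in> H" for h
    proof
      fix p
      obtain n where n: "n > 0" "h ^^ n \<in> K" using pw h by blast
      hence "h ^^ n = id" using d by simp
      hence "(h ^^ n) p = p" by simp
      thus "h p = id p" using funpow_fix[OF subK_PL[OF H h] n(1)] by simp
    qed
    moreover have "id \<in> H" using subgroup.one_closed[OF H] by simp
    ultimately have "H = {id}" by blast
    thus "\<exists>n. (derived PLoI ^^ n) H = {id}" by (intro exI[of _ 0]) simp
  qed
next
  case (Suc k)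
  show ?case
  proof (intro allI impI)
    fix H K assume H: "subgroup H PLoI" and K: "subgroup K PLoI" and KH: "K \<subseteq> H"
      and pw: "\<forall>h\<in>H. \<exists>n>0. h ^^ n \<in> K" and d: "(derived PLoI ^^ Suc k) K = {id}"
    let ?P = "Fixset K"
    have fixH: "h p = p" if h: "h \<in> H" and p: "p \<in> ?P" for h p
    proof -
      obtain n where n: "n > 0" "h ^^ n \<in> K" using pw h by blast
      hence "(h ^^ n) p = p" using p by (simp add: Fixset_def)
      thus ?thesis using funpow_fix[OF subK_PL[OF H h] n(1)] by simp
    qed
    have H': "subgroup (Zg H ?P) PLoI" by (rule Zg_subgroup[OF H]) (use fixH in auto)
    have K': "subgroup (Zg K ?P) PLoI" by (rule Zg_subgroup[OF K]) (auto simp: Fixset_def)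
    have KH': "Zg K ?P \<subseteq> Zg H ?P" using KH by (auto simp: Zg_def)
    have pw': "\<forall>x\<in>Zg H ?P. \<exists>n>0. x ^^ n \<in> Zg K ?P"
    proof
      fix x assume x: "x \<in> Zg H ?P"
      then obtain n where n: "n > 0" "x ^^ n \<in> K" using pw by (auto simp: Zg_def)
      have "x ^^ n \<in> Zg H ?P" using funpow_in_sub[OF H' x] .
      hence "x ^^ n \<in> Zg K ?P" using n(2) by (simp add: Zg_def)
      thus "\<exists>n>0. x ^^ n \<in> Zg K ?P" using n(1) by blast
    qed
    have dK': "(derived PLoI ^^ k) (Zg K ?P) = {id}" using lemmaX[OF K d] .
    obtain n where n: "(derived PLoI ^^ n) (Zg H ?P) = {id}"
      using Suc.IH[rule_format, OF H' K' KH' pw'[rule_format] dK'] by blast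
    have dH: "derived PLoI H \<subseteq> Zg H ?P" by (rule derived_Zg[OF H]) (use fixH in auto)
    have "(derived PLoI ^^ n) (derived PLoI H) \<subseteq> (derived PLoI ^^ n) (Zg H ?P)"
      using group.mono_exp_of_derived[OF group_PLoI dH] .
    hence sub: "(derived PLoI ^^ Suc n) H \<subseteq> {id}" using n by (simp add: funpow_Suc_right del: funpow.simps)
    have "id \<in> (derived PLoI ^^ Suc n) H" using subgroup.one_closed[OF derived_pow_subgroup[OF H, of "Suc n"]] by (simp only: one_PLoI)
    hence "(derived PLoI ^^ Suc n) H = {id}" using sub by blast
    thus "\<exists>n. (derived PLoI ^^ n) H = {id}" by blast
  qed
qed

lemma derived_sub_consistent:
  assumes S: "subgroup S PLoI"
  shows "(derived (PLoI\<lparr>carrier := S\<rparr>) ^^ n) S = (derived PLoI ^^ n) S"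
proof (induction n)
  case (Suc n)
  have "(derived PLoI ^^ n) S \<subseteq> S" using derived_pow_sub[OF S] .
  hence "derived (PLoI\<lparr>carrier := S\<rparr>) ((derived PLoI ^^ n) S) = derived PLoI ((derived PLoI ^^ n) S)"
    using group.derived_consistent[OF group_PLoI _ S] by blast
  thus ?case using Suc by simp
qed simp

lemma cancel_surj: assumes "surj g" "k \<circ> g = f \<circ> g" shows "k = f"
proof
  fix y obtain x where "y = g x" using assms(1) by (metis surjD)
  thus "k y = f y" using assms(2) by (metis comp_apply)
qed

theorem corollary3:
  assumes "subgroup H PLoI"
    and "virtually_solvable (PLoI\<lparr>carrier := H\<rparr>)"
  shows "solvable (PLoI\<lparr>carrier := H\<rparr>)"
proof -
  let ?G = "PLoI\<lparr>carrier := H\<rparr>"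
  have H: "subgroup H PLoI" using assms(1) .
  have gG: "group ?G" using group.subgroup_imp_group[OF group_PLoI H] .
  obtain K where K: "subgroup K ?G" "finite (rcosets\<^bsub>?G\<^esub> K)" "solvable (?G\<lparr>carrier := K\<rparr>)"
    using assms(2) unfolding virtually_solvable_def by blast
  have KH: "K \<subseteq> H" using subgroup.subset[OF K(1)] by simp
  have KP: "subgroup K PLoI"
  proof (rule group.subgroupI[OF group_PLoI])
    show "K \<subseteq> carrier PLoI" using KH subgroup.subset[OF H] by blast
    show "K \<noteq> {}" using subgroup.one_closed[OF K(1)] by blast
    fix a assume a: "a \<in> K"
    have "inv\<^bsub>?G\<^esub> a \<in> K" using subgroup.m_inv_closed[OF K(1) a] .
    moreover have "inv\<^bsub>?G\<^esub> a = inv\<^bsub>PLoI\<^esub> a" using group.m_inv_consistent[OF group_PLoI H] a KH by blast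
    ultimately show "inv\<^bsub>PLoI\<^esub> a \<in> K" by simp
    fix b assume b: "b \<in> K"
    show "a \<otimes>\<^bsub>PLoI\<^esub> b \<in> K" using subgroup.m_closed[OF K(1) a b] by simp
  qed
  have gK: "group (PLoI\<lparr>carrier := K\<rparr>)" using group.subgroup_imp_group[OF group_PLoI KP] .
  have "solvable (PLoI\<lparr>carrier := K\<rparr>)" using K(3) by simp
  hence "\<exists>k. (derived (PLoI\<lparr>carrier := K\<rparr>) ^^ k) K = {id}"
    using group.solvable_iff_trivial_derived_seq[OF gK] by simp
  then obtain k where k: "(derived (PLoI\<lparr>carrier := K\<rparr>) ^^ k) K = {id}" by blast
  hence dK: "(derived PLoI ^^ k) K = {id}" using derived_sub_consistent[OF KP] by simp
  have pw: "\<forall>h\<in>H. \<exists>n>0. h ^^ n \<in> K"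
  proof
    fix h assume h: "h \<in> H"
    define F where "F = (\<lambda>i::nat. K #>\<^bsub>?G\<^esub> (h ^^ i))"
    have Fin: "F i \<in> rcosets\<^bsub>?G\<^esub> K" for i
    proof -
      have "h ^^ i \<in> carrier ?G" using funpow_in_sub[OF H h, of i] by simp
      moreover have "K \<subseteq> carrier ?G" using KH by simp
      ultimately show ?thesis unfolding F_def by (rule group.rcosetsI[OF gG, rotated])
    qed
    have "\<not> inj F"
    proof
      assume i: "inj F"
      have "range F \<subseteq> rcosets\<^bsub>?G\<^esub> K" using Fin by blast
      hence "finite (range F)" using K(2) by (rule finite_subset)
      hence "finite (UNIV :: nat set)" using finite_imageD[OF _ i] by blast
      thus False by simp
    qed
    then obtain i j where ij: "i \<noteq> j" "F i = F j" unfolding inj_def by auto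
    have key: "\<exists>n>0. h ^^ n \<in> K" if ij: "i < j" "F i = F j" for i j
    proof -
      have "id \<in> K" using subgroup.one_closed[OF KP] by simp
      hence "id \<otimes>\<^bsub>?G\<^esub> (h ^^ j) \<in> K #>\<^bsub>?G\<^esub> (h ^^ j)" unfolding r_coset_def by blast
      hence "h ^^ j \<in> F j" unfolding F_def by simp
      hence "h ^^ j \<in> F i" using ij by simp
      then obtain k where k: "k \<in> K" "h ^^ j = k \<circ> h ^^ i" unfolding F_def r_coset_def by auto
      have "h ^^ j = h ^^ (j - i) \<circ> h ^^ i" using ij(1) by (simp add: funpow_add[symmetric])
      hence eq: "k \<circ> h ^^ i = h ^^ (j - i) \<circ> h ^^ i" using k by simp
      have "bij (h ^^ i)" using PL_bij[OF subK_PL[OF H h]] by (simp add: bij_betw_funpow)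
      hence "k = h ^^ (j - i)" using cancel_surj[OF _ eq] by (simp add: bij_is_surj)
      thus ?thesis using k ij(1) by (intro exI[of _ "j - i"]) auto
    qed
    show "\<exists>n>0. h ^^ n \<in> K"
    proof (cases "i < j")
      case True thus ?thesis using key[of i j] ij by blast
    next
      case False hence "j < i" using ij by simp
      thus ?thesis using key[of j i] ij by simp
    qed
  qed
  obtain n where n: "(derived PLoI ^^ n) H = {id}"
    using main_ind[of k, rule_format, OF H KP KH pw[rule_format] dK] by blast
  hence "(derived ?G ^^ n) (carrier ?G) = {\<one>\<^bsub>?G\<^esub>}" using derived_sub_consistent[OF H] by simp
  thus ?thesis using group.solvable_iff_trivial_derived_seq[OF gG] by blast
qed

end
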